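(* Let $A\in\mathbb{R}^{n\times n}$, $1\le K<n$, $\lambda>0$, and $g\in\mathcal{G}$ with Lipschitz constant $\ell>0$ for $g'$, and set $\rho=3\lambda\ell$. For the ADMM iterates $\{(X_k,Y_k,\Lambda_k)\}$ described in the context (arbitrary initialization), for every $k\ge 1$, $$\mathcal{L}_\rho(X_k,Y_k,\Lambda_k)-\mathcal{L}_\rho(X_{k+1},Y_{k+1},\Lambda_{k+1})\ge \frac{7\ell\lambda}{6}\|Y_{k+1}-Y_k\|_F^2 .$$
   Context: $\mathcal{P}_K$ denotes the set of real symmetric $n\times n$ matrices $X$ with $X^2=X$ and $\mathrm{rank}(X)=K$. $\mathcal{G}$ is the class of functions $g:\mathbb{R}\to\mathbb{R}$ that are continuously differentiable, nonnegative, convex, and satisfy $|g'(x_1)-g'(x_2)|\le \ell|x_1-x_2|$ for all $x_1,x_2$. $\langle M,N\rangle=\mathrm{trace}(M^TN)$, $\|\cdot\|_F$ is the Frobenius norm. The augmented Lagrangian is $\mathcal{L}_\rho(X,Y,\Lambda)=\|A-X\|_F^2+\lambda\sum_{i,j}g(Y_{ij})+\frac{\rho}{2}\|X-Y\|_F^2+\langle\Lambda,X-Y\rangle$. The ADMM iteration is: $X_{k+1}\in\arg\min_{X\in\mathcal{P}_K}\mathcal{L}_\rho(X,Y_k,\Lambda_k)$; $Y_{k+1}=\arg\min_{Y\in\mathbb{R}^{n\times n}}\mathcal{L}_\rho(X_{k+1},Y,\Lambda_k)$; $\Lambda_{k+1}=\Lambda_k+\rho(X_{k+1}-Y_{k+1})$.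 *)

theory Defs
  imports "HOL-Analysis.Analysis"
begin

text \<open>Real n x n matrices are rendered as real^'n^'n (n = CARD('n)).\<close>

definition frob_inner :: "real^'n^'n \<Rightarrow> real^'n^'n \<Rightarrow> real" where
  "frob_inner M N = trace (transpose M ** N)"

definition frob_norm :: "real^'n^'n \<Rightarrow> real" where
  "frob_norm M = sqrt (\<Sum>i\<in>UNIV. \<Sum>j\<in>UNIV. (M $ i $ j)^2)"

definition proj_set :: "nat \<Rightarrow> (real^'n^'n) set" where
  "proj_set K = {X. transpose X = X \<and> X ** X = X \<and> rank X = K}"

definition in_class_G :: "(real \<Rightarrow> real) \<Rightarrow> (real \<Rightarrow> real) \<Rightarrow> real \<Rightarrow> bool" where
  "in_class_G g g' l \<longleftrightarrow>
     (\<forall>x. (g has_real_derivative g' x) (at x)) \<and> continuous_on UNIV g' \<and>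
     (\<forall>x. 0 \<le> g x) \<and> convex_on UNIV g \<and>
     (\<forall>x1 x2. \<bar>g' x1 - g' x2\<bar> \<le> l * \<bar>x1 - x2\<bar>)"

definition aug_lag ::
  "real^'n^'n \<Rightarrow> real \<Rightarrow> (real \<Rightarrow> real) \<Rightarrow> real \<Rightarrow>
   real^'n^'n \<Rightarrow> real^'n^'n \<Rightarrow> real^'n^'n \<Rightarrow> real" where
  "aug_lag A lam g rho X Y L =
     (frob_norm (A - X))^2 + lam * (\<Sum>i\<in>UNIV. \<Sum>j\<in>UNIV. g (Y $ i $ j))
     + rho / 2 * (frob_norm (X - Y))^2 + frob_inner L (X - Y)"

text \<open>ADMM iterates (arbitrary initialisation at index 0).\<close>
definition admm_iterates ::
  "real^'n^'n \<Rightarrow> real \<Rightarrow> (real \<Rightarrow> real) \<Rightarrow> real \<Rightarrow> nat \<Rightarrow>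
   (nat \<Rightarrow> real^'n^'n) \<Rightarrow> (nat \<Rightarrow> real^'n^'n) \<Rightarrow> (nat \<Rightarrow> real^'n^'n) \<Rightarrow> bool" where
  "admm_iterates A lam g rho K X Y L \<longleftrightarrow>
     (\<forall>k. X (Suc k) \<in> proj_set K \<and>
          (\<forall>Z\<in>proj_set K. aug_lag A lam g rho (X (Suc k)) (Y k) (L k)
                            \<le> aug_lag A lam g rho Z (Y k) (L k)) \<and>
          (\<forall>W. aug_lag A lam g rho (X (Suc k)) (Y (Suc k)) (L k)
                \<le> aug_lag A lam g rho (X (Suc k)) W (L k)) \<and>
          L (Suc k) = L k + rho *\<^sub>R (X (Suc k) - Y (Suc k)))"

end

theory Submission imports Defs begin
lemma frob_inner_sum: "frob_inner M N = (\<Sum>i\<in>UNIV. \<Sum>j\<in>UNIV. M$i$j * N$i$j)"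
proof -
  have "frob_inner M N = (\<Sum>i\<in>UNIV. \<Sum>k\<in>UNIV. M$k$i * N$k$i)"
    unfolding frob_inner_def trace_def matrix_matrix_mult_def transpose_def by simp
  also have "\<dots> = (\<Sum>k\<in>UNIV. \<Sum>i\<in>UNIV. M$k$i * N$k$i)"
    by (rule sum.swap)
  finally show ?thesis .
qed

lemma frob_norm_sq: "(frob_norm M)^2 = (\<Sum>i\<in>UNIV. \<Sum>j\<in>UNIV. (M$i$j)^2)"
  unfolding frob_norm_def by (simp add: sum_nonneg)

lemma aug_sum: "aug_lag A lam g rho X Y L =
  (\<Sum>i\<in>UNIV. \<Sum>j\<in>UNIV. (A$i$j - X$i$j)^2 + lam * g (Y$i$j) + rho/2 * (X$i$j - Y$i$j)^2
     + L$i$j * (X$i$j - Y$i$j))"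
  unfolding aug_lag_def frob_inner_sum frob_norm_sq
  by (simp add: sum.distrib sum_distrib_left)

lemma sum_upd:
  fixes h :: "'n::finite \<Rightarrow> 'n \<Rightarrow> real \<Rightarrow> real"
  shows "(\<Sum>a\<in>UNIV. \<Sum>b\<in>UNIV. h a b (if a = i \<and> b = j then t else Y a b))
     = (\<Sum>a\<in>UNIV. \<Sum>b\<in>UNIV. h a b (Y a b)) + h i j t - h i j (Y i j)"
proof -
  have "\<And>a b. h a b (if a = i \<and> b = j then t else Y a b) = h a b (Y a b) +
     (if b = j then (if a = i then h i j t - h i j (Y i j) else 0) else 0)" by auto
  then show ?thesis by (simp add: sum.distrib)
qed
lemma scalar_key:
  fixes lam l rho x y0 y1 L0 L1 G0 G1 g0 g1 :: real
  assumes "lam > 0" "l > 0" "rho = 3*lam*l"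
    and tan: "g0 - g1 \<ge> G1 * (y0 - y1)"
    and f1: "lam * G1 = L0 + rho*(x - y1)"
    and f0: "lam * G0 = L0"
    and L1: "L1 = L0 + rho*(x - y1)"
    and lip: "\<bar>G1 - G0\<bar> \<le> l * \<bar>y1 - y0\<bar>"
  shows "(lam * g0 + rho/2*(x-y0)^2 + L0*(x-y0)) - (lam*g1 + rho/2*(x-y1)^2 + L1*(x-y1))
     \<ge> 7*l*lam/6 * (y1 - y0)^2"
proof -
  define d where "d = y0 - y1"
  define u where "u = x - y1"
  have rp: "rho > 0" using assms by simp
  have a1: "lam*(g0 - g1) \<ge> (L0 + rho*u) * d"
  proof -
    have "lam*(G1*d) \<le> lam*(g0-g1)" using mult_left_mono[OF tan, of lam] assms unfolding d_def by simp
    moreover have "lam*(G1*d) = (L0 + rho*u) * d" using f1 unfolding u_def by (metis mult.assoc)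
    ultimately show ?thesis by simp
  qed
  have e: "(lam * g0 + rho/2*(x-y0)^2 + L0*(x-y0)) - (lam*g1 + rho/2*(x-y1)^2 + L1*(x-y1))
     = lam*(g0 - g1) + rho/2*d^2 - rho*u*d - L0*d - rho*u^2"
    unfolding d_def u_def L1 by (simp add: power2_eq_square algebra_simps)
  have ru: "rho*u = lam*(G1 - G0)" using f1 f0 unfolding u_def by (simp add: algebra_simps)
  have "\<bar>rho*u\<bar> \<le> lam*l*\<bar>d\<bar>"
  proof -
    have "\<bar>rho*u\<bar> = \<bar>lam\<bar>*\<bar>G1 - G0\<bar>" unfolding ru by (rule abs_mult)
    hence "\<bar>rho*u\<bar> = lam*\<bar>G1 - G0\<bar>" using assms by simp
    also
    have "\<dots> \<le> lam*(l*\<bar>y1 - y0\<bar>)" using lip assms by simp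
    also have "\<bar>y1 - y0\<bar> = \<bar>d\<bar>" unfolding d_def by simp
    finally show ?thesis by simp
  qed
  hence "(rho*u)^2 \<le> (lam*l*\<bar>d\<bar>)^2"
    by (metis abs_ge_zero abs_power2 power_mono power2_abs)
  hence "rho*(rho*u^2) \<le> rho*(lam*l*d^2/3)"
    using assms by (simp add: power2_eq_square algebra_simps)
  hence b: "rho*u^2 \<le> lam*l*d^2/3" using rp by simp
  have "(y1-y0)^2 = d^2" unfolding d_def by (simp add: power2_eq_square algebra_simps)
  then have c1: "7*l*lam/6 * (y1 - y0)^2 = 7/6*(lam*l*d^2)" by simp
  have c2: "(L0 + rho*u)*d = L0*d + rho*u*d" by (simp add: algebra_simps)
  have c3: "rho/2*d^2 = 3/2*(lam*l*d^2)" using assms by simp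
  show ?thesis unfolding c1 e using a1 b c2 c3 by linarith
qed

lemma first_order:
  fixes A X1 Y1 L0 :: "real^'n^'n"
  assumes G: "in_class_G g g' l"
    and mn: "\<forall>W. aug_lag A lam g rho X1 Y1 L0 \<le> aug_lag A lam g rho X1 W L0"
  shows "lam * g' (Y1$i$j) = L0$i$j + rho*(X1$i$j - Y1$i$j)"
proof -
  define h where "h a b v = (A$a$b - X1$a$b)^2 + lam*g v + rho/2*(X1$a$b - v)^2 + L0$a$b*(X1$a$b - v)"
    for a b v
  have augh: "aug_lag A lam g rho X1 W L0 = (\<Sum>a\<in>UNIV. \<Sum>b\<in>UNIV. h a b (W$a$b))" for W
    unfolding aug_sum h_def by simp
  have loc: "h i j (Y1$i$j) \<le> h i j t" for t
  proof -
    define W where "W = (\<chi> a b. if a = i \<and> b = j then t else Y1$a$b)"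
    have "aug_lag A lam g rho X1 W L0 =
       (\<Sum>a\<in>UNIV. \<Sum>b\<in>UNIV. h a b (if a = i \<and> b = j then t else Y1$a$b))"
      unfolding augh W_def by simp
    also have "\<dots> = aug_lag A lam g rho X1 Y1 L0 + h i j t - h i j (Y1$i$j)"
      unfolding augh by (rule sum_upd)
    finally show ?thesis using mn[rule_format, of W] by simp
  qed
  have gd: "\<And>x. (g has_real_derivative g' x) (at x)" using G unfolding in_class_G_def by blast
  have "((\<lambda>v. h i j v) has_real_derivative (lam*g' (Y1$i$j) - rho*(X1$i$j - Y1$i$j) - L0$i$j)) (at (Y1$i$j))"
    unfolding h_def by (auto intro!: derivative_eq_intros gd simp: field_simps)
  from DERIV_local_min[OF this, of 1] loc
  show ?thesis by (simp add: algebra_simps)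
qed

lemma tangent:
  assumes G: "in_class_G g g' l"
  shows "g t - g y \<ge> g' y * (t - y)"
proof -
  have c: "convex_on UNIV g" and d: "(g has_real_derivative g' y) (at y)"
    using G unfolding in_class_G_def by blast+
  show ?thesis
    by (rule convex_on_imp_above_tangent[OF c]) (use d in auto)
qed

theorem lemma2:
  fixes A :: "real^'n^'n"
    and K :: nat and lam l rho :: real
    and g g' :: "real \<Rightarrow> real"
    and X Y L :: "nat \<Rightarrow> real^'n^'n"
  assumes "1 \<le> K" and "K < CARD('n)"
    and "lam > 0" and "l > 0"
    and "in_class_G g g' l"
    and "rho = 3 * lam * l"
    and "admm_iterates A lam g rho K X Y L"
    and "k \<ge> 1"
  shows "aug_lag A lam g rho (X k) (Y k) (L k)
           - aug_lag A lam g rho (X (Suc k)) (Y (Suc k)) (L (Suc k))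
         \<ge> 7 * l * lam / 6 * (frob_norm (Y (Suc k) - Y k))^2"
proof -
  obtain m where km: "k = Suc m" using assms(8) by (cases k) auto
  have sm: "X (Suc m) \<in> proj_set K"
     "\<forall>W. aug_lag A lam g rho (X (Suc m)) (Y (Suc m)) (L m) \<le> aug_lag A lam g rho (X (Suc m)) W (L m)"
     "L (Suc m) = L m + rho *\<^sub>R (X (Suc m) - Y (Suc m))"
    using assms(7) unfolding admm_iterates_def by blast+
  have sk: "\<forall>Z\<in>proj_set K. aug_lag A lam g rho (X (Suc k)) (Y k) (L k)
                            \<le> aug_lag A lam g rho Z (Y k) (L k)"
     "\<forall>W. aug_lag A lam g rho (X (Suc k)) (Y (Suc k)) (L k) \<le> aug_lag A lam g rho (X (Suc k)) W (L k)"
     "L (Suc k) = L k + rho *\<^sub>R (X (Suc k) - Y (Suc k))"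
    using assms(7) unfolding admm_iterates_def by blast+
  have D1: "aug_lag A lam g rho (X (Suc k)) (Y k) (L k) \<le> aug_lag A lam g rho (X k) (Y k) (L k)"
    using sk(1) sm(1) km by blast
  have fo1: "lam * g' (Y (Suc k)$i$j) = L k$i$j + rho*(X (Suc k)$i$j - Y (Suc k)$i$j)" for i j
    by (rule first_order[OF assms(5) sk(2)])
  have fo0: "lam * g' (Y k$i$j) = L k$i$j" for i j
    using first_order[OF assms(5) sm(2), of i j] sm(3) km by simp
  have Lk1: "L (Suc k)$i$j = L k$i$j + rho*(X (Suc k)$i$j - Y (Suc k)$i$j)" for i j
    using sk(3) by simp
  have lip: "\<bar>g' x1 - g' x2\<bar> \<le> l * \<bar>x1 - x2\<bar>" for x1 x2
    using assms(5) unfolding in_class_G_def by blast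
  let ?x = "X (Suc k)"
  have ent: "((A$i$j - ?x$i$j)^2 + lam * g (Y k$i$j) + rho/2 * (?x$i$j - Y k$i$j)^2
     + L k$i$j * (?x$i$j - Y k$i$j)) -
     ((A$i$j - ?x$i$j)^2 + lam * g (Y (Suc k)$i$j) + rho/2 * (?x$i$j - Y (Suc k)$i$j)^2
     + L (Suc k)$i$j * (?x$i$j - Y (Suc k)$i$j))
     \<ge> 7*l*lam/6 * ((Y (Suc k) - Y k)$i$j)^2" for i j
  proof -
    have "(lam * g (Y k$i$j) + rho/2*(?x$i$j-Y k$i$j)^2 + L k$i$j*(?x$i$j-Y k$i$j))
       - (lam*g (Y (Suc k)$i$j) + rho/2*(?x$i$j-Y (Suc k)$i$j)^2 + L (Suc k)$i$j*(?x$i$j-Y (Suc k)$i$j))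
     \<ge> 7*l*lam/6 * (Y (Suc k)$i$j - Y k$i$j)^2"
      by (rule scalar_key[OF assms(3,4,6) tangent[OF assms(5)] fo1 fo0 Lk1 lip])
    then show ?thesis by simp
  qed
  have D23: "aug_lag A lam g rho ?x (Y k) (L k) - aug_lag A lam g rho ?x (Y (Suc k)) (L (Suc k))
     \<ge> 7 * l * lam / 6 * (frob_norm (Y (Suc k) - Y k))^2"
    unfolding aug_sum frob_norm_sq sum_distrib_left sum_subtractf[symmetric]
    by (intro sum_mono ent)
  show ?thesis using D1 D23 by linarith
qed

end
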